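(* Let $x_0\in\mathbb{R}^2$, $r_0>0$, and let $E$ be a relatively closed subset of $B(x_0,r_0)$ that contains $x_0$ and separates $B(x_0,r_0)$. (1) For all $x\in E\cap B(x_0,r_0)$ and $\gamma>0$ such that $B(x,\gamma r_0)\subset B(x_0,r_0)$ and $\beta_E(x_0,r_0)\le\gamma/4$, the set $E$ separates $B(x,\gamma r_0)$. (2) Assume $\beta_E(x_0,r_0)\le1/100$. Let $x\in E\cap B(x_0,9r_0/10)$ and $r^x_0\ge r_0/10$ be such that $B(x,r^x_0)\subset B(x_0,r_0)$, and let $0<r\le r^x_0$ be such that $\beta_E(x,t)\le1/8$ for all $t\in[r,r^x_0]$. Then $E$ separates $B(x,r)$.
   Context: $B(x,r)$ is the open ball. For a set $F$ and $x\in F$, $\beta_F(x,r)=r^{-1}\inf_\ell\sup_{y\in F\cap B(x,r)}\mathrm{dist}(y,\ell)$, infimum over lines $\ell$ through $x$ (attained). With $\nu(x,r)$ a unit normal of a minimizing line and $D^\pm_t(x,r)=\{z\in B(x,r):\pm(z-x)\cdot\nu(x,r)>t\}$, $F$ separates $B(x,r)$ if $\beta:=\beta_F(x,r)\le1/2$ and $D^+_{\beta r}(x,r)$, $D^-_{\beta r}(x,r)$ lie in distinct connected components of $B(x,r)\setminus F$ (independent of the choice of minimizing line). *)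

theory Defs
  imports "HOL-Analysis.Analysis"
begin

type_synonym pt = "real ^ 2"

definition lines_through :: "pt \<Rightarrow> pt set set" where
  "lines_through x = {{x + t *\<^sub>R v | t. True} | v. v \<noteq> 0}"

definition width :: "pt set \<Rightarrow> pt \<Rightarrow> real \<Rightarrow> pt set \<Rightarrow> real" where
  "width F x r l = (SUP y \<in> F \<inter> ball x r. infdist y l)"

definition beta :: "pt set \<Rightarrow> pt \<Rightarrow> real \<Rightarrow> real" where
  "beta F x r = (INF l \<in> lines_through x. width F x r l) / r"

definition Dplus :: "pt \<Rightarrow> real \<Rightarrow> pt \<Rightarrow> real \<Rightarrow> pt set" where
  "Dplus x r \<nu> t = {z \<in> ball x r. (z - x) \<bullet> \<nu> > t}"

definition Dminus :: "pt \<Rightarrow> real \<Rightarrow> pt \<Rightarrow> real \<Rightarrow> pt set" where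
  "Dminus x r \<nu> t = {z \<in> ball x r. - ((z - x) \<bullet> \<nu>) > t}"

definition separates :: "pt set \<Rightarrow> pt \<Rightarrow> real \<Rightarrow> bool" where
  "separates F x r \<longleftrightarrow> beta F x r \<le> 1/2 \<and>
     (\<exists>l \<in> lines_through x. \<exists>\<nu>.
        width F x r l = beta F x r * r \<and>
        norm \<nu> = 1 \<and> (\<forall>z \<in> l. (z - x) \<bullet> \<nu> = 0) \<and>
        (\<exists>C1 \<in> components (ball x r - F). \<exists>C2 \<in> components (ball x r - F).
           C1 \<noteq> C2 \<and> Dplus x r \<nu> (beta F x r * r) \<subseteq> C1 \<and>
           Dminus x r \<nu> (beta F x r * r) \<subseteq> C2))"

end

theory Submission
  imports Defs
begin

lemma infdist_line_ge:
  fixes n :: pt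
  assumes "norm n = 1" "l \<noteq> {}" "\<forall>p\<in>l. (p - x) \<bullet> n = 0"
  shows "\<bar>(z - x) \<bullet> n\<bar> \<le> infdist z l"
proof -
  have "\<bar>(z - x) \<bullet> n\<bar> \<le> dist z p" if "p \<in> l" for p
  proof -
    have "(z - x) \<bullet> n = (z - p) \<bullet> n"
      using assms(3) that by (simp add: inner_diff_left)
    also have "\<bar>\<dots>\<bar> \<le> norm (z - p) * norm n" by (rule Cauchy_Schwarz_ineq2)
    finally show ?thesis using assms(1) by (simp add: dist_norm)
  qed
  then show ?thesis using assms(2) unfolding infdist_notempty[OF assms(2)]
    by (intro cINF_greatest) auto
qed

lemma perp2:
  fixes u v n :: pt
  assumes "v \<noteq> 0" "u \<bullet> v = 0" "n \<bullet> v = 0" "norm n = 1"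
  shows "u = (u \<bullet> n) *\<^sub>R n"
proof -
  have v: "v$1 \<noteq> 0 \<or> v$2 \<noteq> 0" using assms(1) by (auto simp: vec_eq_iff forall_2)
  have n: "n$1 * n$1 + n$2 * n$2 = 1" using assms(4)
    by (simp add: norm_eq_1 inner_vec_def sum_2)
  have a: "u$1 * v$1 + u$2 * v$2 = 0" "n$1 * v$1 + n$2 * v$2 = 0"
    using assms(2,3) by (auto simp: inner_vec_def sum_2)
  have d: "u$1 * n$2 - u$2 * n$1 = 0"
  proof (cases "v$1 = 0")
    case True
    then have "v$2 \<noteq> 0" using v by auto
    then have "u$2 = 0" "n$2 = 0" using a True by auto
    then show ?thesis using True by simp
  next
    case False
    have e: "u$1 * v$1 = -(u$2 * v$2)" "n$1 * v$1 = -(n$2 * v$2)" using a by linarith+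
    have "(u$1 * n$2 - u$2 * n$1) * v$1 = n$2 * (u$1 * v$1) - u$2 * (n$1 * v$1)"
      by (simp add: algebra_simps)
    also have "\<dots> = 0" unfolding e by (simp add: algebra_simps)
    finally show ?thesis using False by auto
  qed
  have c1: "u$1 = (u$1 * n$1 + u$2 * n$2) * n$1"
  proof -
    have "u$1 = u$1 * (n$1 * n$1 + n$2 * n$2)" using n by simp
    also have "\<dots> = (u$1 * n$1 + u$2 * n$2) * n$1 + n$2 * (u$1 * n$2 - u$2 * n$1)"
      by (simp add: algebra_simps)
    finally show ?thesis using d by simp
  qed
  have c2: "u$2 = (u$1 * n$1 + u$2 * n$2) * n$2"
  proof -
    have "u$2 = u$2 * (n$1 * n$1 + n$2 * n$2)" using n by simp
    also have "\<dots> = (u$1 * n$1 + u$2 * n$2) * n$2 - n$1 * (u$1 * n$2 - u$2 * n$1)"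
      by (simp add: algebra_simps)
    finally show ?thesis using d by simp
  qed
  show ?thesis
    unfolding vec_eq_iff forall_2 using c1 c2
    by (simp add: inner_vec_def sum_2)
qed


lemma infdist_line_eq:
  fixes v n :: pt
  assumes "v \<noteq> 0" "n \<bullet> v = 0" "norm n = 1"
  shows "infdist z {x + t *\<^sub>R v | t. True} = \<bar>(z - x) \<bullet> n\<bar>"
proof (rule antisym)
  define t where "t = ((z - x) \<bullet> v) / (v \<bullet> v)"
  define u where "u = (z - x) - t *\<^sub>R v"
  have vv: "v \<bullet> v \<noteq> 0" using assms(1) by simp
  have "u \<bullet> v = 0" unfolding u_def t_def using vv by (simp add: inner_diff_left)
  then have u: "u = (u \<bullet> n) *\<^sub>R n" using perp2[OF assms(1) _ assms(2,3)] by simp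
  have vn: "v \<bullet> n = 0" using assms(2) by (simp add: inner_commute)
  have un: "u \<bullet> n = (z - x) \<bullet> n" unfolding u_def using vn
    by (simp add: inner_diff_left)
  have "norm u = \<bar>u \<bullet> n\<bar>" using u assms(3)
    by (metis mult.right_neutral norm_scaleR)
  then have "dist z (x + t *\<^sub>R v) = \<bar>(z - x) \<bullet> n\<bar>"
    using un vn unfolding u_def dist_norm by (simp add: algebra_simps)
  then show "infdist z {x + t *\<^sub>R v | t. True} \<le> \<bar>(z - x) \<bullet> n\<bar>"
    by (metis (mono_tags, lifting) infdist_le mem_Collect_eq)
next
  show "\<bar>(z - x) \<bullet> n\<bar> \<le> infdist z {x + t *\<^sub>R v | t. True}"
    using assms by (intro infdist_line_ge) (auto simp: inner_commute)
qed

definition rot :: "pt \<Rightarrow> pt" where "rot v = vector [-(v$2), v$1]"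

lemma rot_perp: "rot v \<bullet> v = 0"
  by (simp add: rot_def inner_vec_def sum_2)

lemma rot_norm: "norm (rot v) = norm v"
  by (simp add: rot_def norm_eq_sqrt_inner inner_vec_def sum_2 algebra_simps)

definition gw :: "pt set \<Rightarrow> pt \<Rightarrow> pt \<Rightarrow> real" where
  "gw F x n = (SUP z \<in> F. \<bar>(z - x) \<bullet> n\<bar>)"

lemma width_eq:
  fixes v n :: pt
  assumes "v \<noteq> 0" "n \<bullet> v = 0" "norm n = 1"
  shows "width E x r {x + t *\<^sub>R v | t. True} = gw (E \<inter> ball x r) x n"
  unfolding width_def gw_def using infdist_line_eq[OF assms] by simp

lemma gw_bdd:
  assumes "F \<subseteq> ball x r"
  shows "bdd_above ((\<lambda>z. \<bar>(z - x) \<bullet> n\<bar>) ` F)"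
proof (rule bdd_aboveI2)
  fix z assume "z \<in> F"
  then have "norm (z - x) \<le> r" using assms by (auto simp: dist_norm norm_minus_commute)
  then show "\<bar>(z - x) \<bullet> n\<bar> \<le> r * norm n"
    using Cauchy_Schwarz_ineq2[of "z - x" n] by (meson mult_right_mono norm_ge_zero order_trans)
qed

lemma gw_upper:
  assumes "F \<subseteq> ball x r" "z \<in> F"
  shows "\<bar>(z - x) \<bullet> n\<bar> \<le> gw F x n"
  unfolding gw_def using gw_bdd[OF assms(1)] assms(2) by (rule cSUP_upper2) auto

lemma gw_lip:
  assumes "F \<subseteq> ball x r" "F \<noteq> {}" "r > 0"
  shows "gw F x n1 \<le> gw F x n2 + r * norm (n1 - n2)"
  unfolding gw_def[of F x n1]
proof (rule cSUP_least[OF assms(2)])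
  fix z assume z: "z \<in> F"
  then have "norm (z - x) \<le> r" using assms by (auto simp: dist_norm norm_minus_commute)
  then have a: "\<bar>(z - x) \<bullet> (n1 - n2)\<bar> \<le> r * norm (n1 - n2)"
    using Cauchy_Schwarz_ineq2[of "z - x" "n1 - n2"] by (meson mult_right_mono norm_ge_zero order_trans)
  have "\<bar>(z - x) \<bullet> n1\<bar> \<le> \<bar>(z - x) \<bullet> n2\<bar> + \<bar>(z - x) \<bullet> (n1 - n2)\<bar>"
    by (simp add: inner_diff_right)
  also have "\<dots> \<le> gw F x n2 + r * norm (n1 - n2)"
    using a gw_upper[OF assms(1) z, of n2] by linarith
  finally show "\<bar>(z - x) \<bullet> n1\<bar> \<le> gw F x n2 + r * norm (n1 - n2)" .
qed

lemma gw_cont: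
  assumes "F \<subseteq> ball x r" "F \<noteq> {}" "r > 0"
  shows "continuous_on S (gw F x)"
proof (rule lipschitz_on_continuous_on)
  show "r-lipschitz_on S (gw F x)"
    unfolding lipschitz_on_def
  proof (intro conjI ballI)
    fix a b assume "a \<in> S" "b \<in> S"
    have "gw F x a \<le> gw F x b + r * norm (a - b)" "gw F x b \<le> gw F x a + r * norm (b - a)"
      using gw_lip[OF assms] by auto
    then show "dist (gw F x a) (gw F x b) \<le> r * dist a b"
      by (simp add: dist_norm dist_real_def norm_minus_commute abs_le_iff)
  qed (use assms in auto)
qed

lemma min_line:
  assumes "x \<in> E" "r > 0"
  shows "\<exists>n. norm n = 1 \<and> beta E x r * r = gw (E \<inter> ball x r) x n
     \<and> (\<forall>m. norm m = 1 \<longrightarrow> gw (E \<inter> ball x r) x n \<le> gw (E \<inter> ball x r) x m)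
     \<and> {x + t *\<^sub>R rot n | t. True} \<in> lines_through x
     \<and> width E x r {x + t *\<^sub>R rot n | t. True} = gw (E \<inter> ball x r) x n"
proof -
  let ?F = "E \<inter> ball x r"
  have F: "?F \<subseteq> ball x r" "?F \<noteq> {}" using assms by auto
  obtain n where n: "n \<in> sphere 0 1" "\<forall>m\<in>sphere 0 1. gw ?F x n \<le> gw ?F x m"
  proof -
    have "sphere (0::pt) 1 \<noteq> {}" by simp
    then show ?thesis using that continuous_attains_inf[OF compact_sphere _ gw_cont[OF F assms(2)], of 0 1]
      by blast
  qed
  have n1: "norm n = 1" using n by simp
  have rn: "rot n \<noteq> 0" using rot_norm[of n] n1 by (metis norm_zero zero_neq_one)
  have np: "n \<bullet> rot n = 0" using rot_perp by (simp add: inner_commute)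
  have L: "{x + t *\<^sub>R rot n | t. True} \<in> lines_through x"
    unfolding lines_through_def using rn by blast
  have W: "width E x r {x + t *\<^sub>R rot n | t. True} = gw ?F x n"
    using width_eq[OF rn np n1] .
  have "(INF l \<in> lines_through x. width E x r l) = gw ?F x n"
    unfolding image_def
  proof (rule cInf_eq_minimum)
    show "gw ?F x n \<in> {y. \<exists>l\<in>lines_through x. y = width E x r l}" using L W
      by (auto intro!: bexI[of _ "{x + t *\<^sub>R rot n | t. True}"])
  next
    fix w assume "w \<in> {y. \<exists>l\<in>lines_through x. y = width E x r l}"
    then obtain v where v: "v \<noteq> 0" "w = width E x r {x + t *\<^sub>R v | t. True}"
      unfolding lines_through_def by auto
    define m where "m = (1 / norm v) *\<^sub>R rot v"
    have m1: "norm m = 1" unfolding m_def using rot_norm[of v] v by simp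
    have "m \<bullet> v = 0" unfolding m_def using rot_perp[of v] by simp
    then have "w = gw ?F x m" using width_eq[OF v(1) _ m1] v by simp
    then show "gw ?F x n \<le> w" using n m1 by simp
  qed
  then have "beta E x r * r = gw ?F x n" unfolding beta_def using assms by simp
  then show ?thesis using n1 n L W by auto
qed

lemma pt_exists:
  fixes n \<nu> :: pt
  assumes "norm n = 1" "norm \<nu> = 1" "\<rho> > 0"
  shows "\<exists>u. norm u < \<rho> \<and> u \<bullet> n > \<rho> / 2 \<and> \<bar>u \<bullet> \<nu>\<bar> > \<rho> / 2"
proof -
  obtain \<mu> where mu: "norm \<mu> = 1" "n \<bullet> \<mu> \<ge> 0" "\<bar>w \<bullet> \<mu>\<bar> = \<bar>w \<bullet> \<nu>\<bar>" for w
  proof (cases "n \<bullet> \<nu> \<ge> 0")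
    case True then show ?thesis using that[of \<nu>] assms by auto
  next
    case False then show ?thesis using that[of "-\<nu>"] assms by auto
  qed
  define s where "s = n \<bullet> \<mu>"
  define m where "m = n + \<mu>"
  have mm: "m \<bullet> m = 2 + 2 * s" unfolding m_def s_def using assms(1) mu(1)
    by (simp add: inner_add_left inner_add_right inner_commute norm_eq_1)
  have s0: "s \<ge> 0" using mu s_def by simp
  have nm: "norm m = sqrt (2 + 2 * s)" using mm by (simp add: norm_eq_sqrt_inner)
  have npos: "norm m > 0" using nm s0 by simp
  define k where "k = (1 + s) / norm m"
  have kpos: "k > 0" unfolding k_def using npos s0 by simp
  have "k^2 = (1 + s)^2 / (2 + 2 * s)" unfolding k_def using nm s0
    by (simp add: power_divide)
  also have "\<dots> = (1 + s) / 2" using s0 by (simp add: power2_eq_square field_simps)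
  finally have k2: "k^2 = (1 + s) / 2" .
  have "(5/9::real)^2 < 1/2" by (simp add: power2_eq_square)
  then have "k^2 > (5/9)^2" using k2 s0 by (simp add: power2_eq_square)
  then have k: "k > 5/9" using kpos
    by (smt (verit) power_mono)
  define u where "u = (9/10 * \<rho> / norm m) *\<^sub>R m"
  have nu: "norm u = 9/10 * \<rho>" unfolding u_def using npos assms(3) by simp
  have un: "u \<bullet> n = 9/10 * \<rho> * k" unfolding u_def k_def m_def s_def
    using assms(1) by (simp add: inner_add_left inner_add_right inner_commute norm_eq_1)
  have um: "u \<bullet> \<mu> = 9/10 * \<rho> * k" unfolding u_def k_def m_def s_def
    using mu(1) by (simp add: inner_add_left inner_add_right inner_commute norm_eq_1)
  have rk: "9/10 * \<rho> * k > 9/10 * \<rho> * (5/9)"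
    using k assms(3) by (intro mult_strict_left_mono) auto
  have "norm u < \<rho>" using nu assms(3) by simp
  moreover have "u \<bullet> n > \<rho> / 2" using un rk by linarith
  moreover have "\<bar>u \<bullet> \<nu>\<bar> > \<rho> / 2" using um rk mu(3)[of u] by linarith
  ultimately show ?thesis by blast
qed

lemma comp_sep:
  assumes "C1 \<in> components S" "C2 \<in> components S" "C1 \<noteq> C2" "p \<in> C1" "q \<in> C2"
    "connected_component S p q"
  shows False
proof -
  obtain a where a: "C1 = connected_component_set S a" using assms(1) components_iff by blast
  then have "q \<in> C1" using assms(4,6) connected_component_trans by fastforce
  then show False using assms(1,2,3,5) components_eq by blast
qed

lemma Dplus_eq: "Dplus x r \<nu> t = ball x r \<inter> {z. inner \<nu> z > t + inner \<nu> x}"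
  unfolding Dplus_def by (auto simp: inner_diff_left inner_commute[of \<nu>])

lemma Dminus_eq: "Dminus x r \<nu> t = ball x r \<inter> {z. inner (-\<nu>) z > t + inner (-\<nu>) x}"
  unfolding Dminus_def by (auto simp: inner_diff_left inner_commute[of \<nu>])


lemma core:
  assumes R: "R > 0" and rho: "\<rho> > 0" and xE: "x \<in> E" and sub: "ball x \<rho> \<subseteq> ball y R"
    and sep: "separates E y R" and small: "beta E y R * R \<le> \<rho> / 4"
  shows "separates E x \<rho>"
proof -
  define w0 where "w0 = beta E y R * R"
  from sep obtain l0 \<nu>0 C1 C2 where l0: "l0 \<in> lines_through y"
    and wid: "width E y R l0 = w0" and n0: "norm \<nu>0 = 1" and perp: "\<forall>z\<in>l0. (z - y) \<bullet> \<nu>0 = 0"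
    and C1: "C1 \<in> components (ball y R - E)" and C2: "C2 \<in> components (ball y R - E)"
    and C12: "C1 \<noteq> C2" and DP: "Dplus y R \<nu>0 w0 \<subseteq> C1" and DM: "Dminus y R \<nu>0 w0 \<subseteq> C2"
    unfolding separates_def w0_def by blast
  have yl0: "y \<in> l0" using l0 unfolding lines_through_def by force
  have strip: "\<bar>(z - y) \<bullet> \<nu>0\<bar> \<le> w0" if z: "z \<in> E \<inter> ball y R" for z
  proof -
    have "\<bar>(z - y) \<bullet> \<nu>0\<bar> \<le> infdist z l0"
      using infdist_line_ge[OF n0 _ perp] yl0 by blast
    also have "\<dots> \<le> width E y R l0" unfolding width_def
    proof (rule cSUP_upper[OF z])
      show "bdd_above ((\<lambda>z. infdist z l0) ` (E \<inter> ball y R))"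
      proof (rule bdd_aboveI2)
        fix z assume "z \<in> E \<inter> ball y R"
        then show "infdist z l0 \<le> R" using infdist_le[OF yl0, of z]
          by (auto simp: dist_commute)
      qed
    qed
    finally show ?thesis using wid by simp
  qed
  have xy: "x \<in> ball y R" using sub rho by (meson centre_in_ball subsetD)
  have cx: "\<bar>(x - y) \<bullet> \<nu>0\<bar> \<le> w0" using strip xE xy by blast
  let ?F = "E \<inter> ball x \<rho>"
  have F: "?F \<subseteq> ball x \<rho>" "?F \<noteq> {}" using xE rho by auto
  obtain n where n1: "norm n = 1" and bn: "beta E x \<rho> * \<rho> = gw ?F x n"
    and nmin: "\<forall>m. norm m = 1 \<longrightarrow> gw ?F x n \<le> gw ?F x m"
    and L: "{x + t *\<^sub>R rot n | t. True} \<in> lines_through x"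
    and W: "width E x \<rho> {x + t *\<^sub>R rot n | t. True} = gw ?F x n"
    using min_line[OF xE rho] by blast
  have "gw ?F x \<nu>0 \<le> 2 * w0"
    unfolding gw_def
  proof (rule cSUP_least[OF F(2)])
    fix z assume z: "z \<in> ?F"
    then have "z \<in> E \<inter> ball y R" using sub by auto
    then have "\<bar>(z - y) \<bullet> \<nu>0\<bar> \<le> w0" by (rule strip)
    moreover have "(z - x) \<bullet> \<nu>0 = (z - y) \<bullet> \<nu>0 - (x - y) \<bullet> \<nu>0"
      by (simp add: inner_diff_left)
    ultimately show "\<bar>(z - x) \<bullet> \<nu>0\<bar> \<le> 2 * w0" using cx by linarith
  qed
  then have gn: "gw ?F x n \<le> \<rho> / 2" using nmin n0 small w0_def by force
  have hb: "beta E x \<rho> \<le> 1/2"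
  proof -
    have "beta E x \<rho> * \<rho> \<le> (1/2) * \<rho>" using gn bn by simp
    then show ?thesis using rho by simp
  qed
  have inE: "\<bar>(z - x) \<bullet> n\<bar> \<le> gw ?F x n" if "z \<in> ?F" for z
    using gw_upper[OF F(1) that] .
  obtain u where u: "norm u < \<rho>" "u \<bullet> n > \<rho> / 2" "\<bar>u \<bullet> \<nu>0\<bar> > \<rho> / 2"
    using pt_exists[OF n1 n0 rho] by blast
  define b where "b = beta E x \<rho> * \<rho>"
  let ?S = "ball x \<rho> - E"
  have Dp: "Dplus x \<rho> n b \<subseteq> ?S"
  proof
    fix z assume "z \<in> Dplus x \<rho> n b"
    then have z: "z \<in> ball x \<rho>" "(z - x) \<bullet> n > gw ?F x n" unfolding Dplus_def b_def bn by auto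
    then show "z \<in> ?S" using inE by force
  qed
  have Dm: "Dminus x \<rho> n b \<subseteq> ?S"
  proof
    fix z assume "z \<in> Dminus x \<rho> n b"
    then have z: "z \<in> ball x \<rho>" "- ((z - x) \<bullet> n) > gw ?F x n" unfolding Dminus_def b_def bn by auto
    then show "z \<in> ?S" using inE by force
  qed
  have du: "dist x (x + u) = norm u" "dist x (x - u) = norm u" by (simp_all add: dist_norm)
  have p1: "x + u \<in> Dplus x \<rho> n b" using u gn du unfolding Dplus_def b_def bn
    by auto
  have p2: "x - u \<in> Dminus x \<rho> n b" using u gn du unfolding Dminus_def b_def bn
    by auto
  have cp: "connected (Dplus x \<rho> n b)" unfolding Dplus_eq
    by (intro convex_connected convex_Int convex_ball convex_halfspace_gt)
  have cm: "connected (Dminus x \<rho> n b)" unfolding Dminus_eq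
    by (intro convex_connected convex_Int convex_ball convex_halfspace_gt)
  define K1 where "K1 = connected_component_set ?S (x + u)"
  define K2 where "K2 = connected_component_set ?S (x - u)"
  have K1: "K1 \<in> components ?S" unfolding K1_def components_iff using Dp p1 by blast
  have K2: "K2 \<in> components ?S" unfolding K2_def components_iff using Dm p2 by blast
  have DK1: "Dplus x \<rho> n b \<subseteq> K1" unfolding K1_def
    by (rule connected_component_maximal[OF p1 cp Dp])
  have DK2: "Dminus x \<rho> n b \<subseteq> K2" unfolding K2_def
    by (rule connected_component_maximal[OF p2 cm Dm])
  have K12: "K1 \<noteq> K2"
  proof
    assume "K1 = K2"
    then have "x - u \<in> K1" unfolding K2_def K1_def using Dm p2 connected_component_refl
      by (metis mem_Collect_eq subsetD)
    then have cc: "connected_component (ball y R - E) (x + u) (x - u)"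
      unfolding K1_def using sub connected_component_of_subset[of ?S "x + u" "x - u"]
      by (metis Diff_mono mem_Collect_eq order_refl)
    have "dist x (x + u) = norm u" "dist x (x - u) = norm u" by (simp_all add: dist_norm)
    then have i1: "x + u \<in> ball x \<rho>" and i2: "x - u \<in> ball x \<rho>" using u by auto
    have in1: "x + u \<in> ball y R" "x - u \<in> ball y R"
      using subsetD[OF sub i1] subsetD[OF sub i2] by simp_all
    have pe: "(x + u - y) \<bullet> \<nu>0 = (x - y) \<bullet> \<nu>0 + u \<bullet> \<nu>0"
      "(x - u - y) \<bullet> \<nu>0 = (x - y) \<bullet> \<nu>0 - u \<bullet> \<nu>0"
      by (simp_all add: algebra_simps inner_diff_left inner_add_left)
    have w4: "2 * w0 \<le> \<rho> / 2" using small w0_def by simp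
    have cx2: "-w0 \<le> (x - y) \<bullet> \<nu>0" "(x - y) \<bullet> \<nu>0 \<le> w0" using cx by (simp_all add: abs_le_iff)
    show False
    proof (cases "u \<bullet> \<nu>0 > 0")
      case True
      then have uv: "u \<bullet> \<nu>0 > \<rho>/2" using u(3) by simp
      have "(x + u - y) \<bullet> \<nu>0 > w0" "- ((x - u - y) \<bullet> \<nu>0) > w0"
        using pe uv cx2 w4 by linarith+
      then have "x + u \<in> Dplus y R \<nu>0 w0" "x - u \<in> Dminus y R \<nu>0 w0"
        using in1 unfolding Dplus_def Dminus_def by simp_all
      then show False using comp_sep[OF C1 C2 C12 _ _ cc] DP DM by blast
    next
      case False
      then have uv: "u \<bullet> \<nu>0 < -(\<rho>/2)" using u(3) by simp
      have "(x - u - y) \<bullet> \<nu>0 > w0" "- ((x + u - y) \<bullet> \<nu>0) > w0"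
        using pe uv cx2 w4 by linarith+
      then have "x + u \<in> Dminus y R \<nu>0 w0" "x - u \<in> Dplus y R \<nu>0 w0"
        using in1 unfolding Dplus_def Dminus_def by simp_all
      then show False using comp_sep[OF C1 C2 C12 _ _ connected_component_sym[OF cc]] DP DM
        by blast
    qed
  qed
  have perpn: "\<forall>z\<in>{x + t *\<^sub>R rot n | t. True}. (z - x) \<bullet> n = 0"
    using rot_perp by auto
  have Wb: "width E x \<rho> {x + t *\<^sub>R rot n | t. True} = beta E x \<rho> * \<rho>" using W bn by simp
  have ex: "\<exists>l \<in> lines_through x. \<exists>\<nu>.
        width E x \<rho> l = beta E x \<rho> * \<rho> \<and>
        norm \<nu> = 1 \<and> (\<forall>z \<in> l. (z - x) \<bullet> \<nu> = 0) \<and>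
        (\<exists>C1 \<in> components (ball x \<rho> - E). \<exists>C2 \<in> components (ball x \<rho> - E).
           C1 \<noteq> C2 \<and> Dplus x \<rho> \<nu> (beta E x \<rho> * \<rho>) \<subseteq> C1 \<and>
           Dminus x \<rho> \<nu> (beta E x \<rho> * \<rho>) \<subseteq> C2)"
    apply (rule bexI[OF _ L])
    apply (rule exI[of _ n])
    using Wb n1 perpn K1 K2 K12 DK1 DK2 unfolding b_def by blast
  show ?thesis unfolding separates_def using hb ex by blast
qed


theorem lemma4p15:
  fixes x0 :: pt and r0 :: real and E :: "pt set"
  assumes "r0 > 0"
    and "E \<subseteq> ball x0 r0"
    and "closedin (top_of_set (ball x0 r0)) E"
    and "x0 \<in> E"
    and "separates E x0 r0"
  shows "(\<forall>x \<gamma>. x \<in> E \<inter> ball x0 r0 \<and> \<gamma> > 0 \<and> ball x (\<gamma> * r0) \<subseteq> ball x0 r0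
              \<and> beta E x0 r0 \<le> \<gamma> / 4 \<longrightarrow> separates E x (\<gamma> * r0))
       \<and> (beta E x0 r0 \<le> 1/100 \<longrightarrow>
          (\<forall>x rx r. x \<in> E \<inter> ball x0 (9 * r0 / 10) \<and> rx \<ge> r0 / 10
              \<and> ball x rx \<subseteq> ball x0 r0 \<and> 0 < r \<and> r \<le> rx
              \<and> (\<forall>t \<in> {r..rx}. beta E x t \<le> 1/8)
              \<longrightarrow> separates E x r))"
proof (intro conjI allI impI)
  fix x \<gamma>
  assume h: "x \<in> E \<inter> ball x0 r0 \<and> \<gamma> > 0 \<and> ball x (\<gamma> * r0) \<subseteq> ball x0 r0
              \<and> beta E x0 r0 \<le> \<gamma> / 4"
  have "beta E x0 r0 * r0 \<le> \<gamma> / 4 * r0" using h assms(1) by (intro mult_right_mono) auto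
  then show "separates E x (\<gamma> * r0)"
    using core[OF assms(1) _ _ _ assms(5), of "\<gamma> * r0" x] h assms(1) by auto
next
  fix x rx r
  assume hb: "beta E x0 r0 \<le> 1/100"
  assume h: "x \<in> E \<inter> ball x0 (9 * r0 / 10) \<and> rx \<ge> r0 / 10
              \<and> ball x rx \<subseteq> ball x0 r0 \<and> 0 < r \<and> r \<le> rx
              \<and> (\<forall>t \<in> {r..rx}. beta E x t \<le> 1/8)"
  then have xE: "x \<in> E" and rx: "rx \<ge> r0 / 10" and sub: "ball x rx \<subseteq> ball x0 r0"
    and r: "0 < r" "r \<le> rx" and bt: "\<And>t. r \<le> t \<Longrightarrow> t \<le> rx \<Longrightarrow> beta E x t \<le> 1/8"
    by auto
  have "beta E x0 r0 * r0 \<le> 1/100 * r0" using hb assms(1) by (intro mult_right_mono) auto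
  then have base: "separates E x rx"
    using core[OF assms(1) _ xE sub assms(5)] r rx by auto
  have step: "\<forall>t. r \<le> t \<and> t \<le> rx \<and> rx \<le> 2^k * t \<longrightarrow> separates E x t" for k :: nat
  proof (induction k)
    case 0
    then show ?case using base by auto
  next
    case (Suc k)
    show ?case
    proof (intro allI impI)
      fix t assume t: "r \<le> t \<and> t \<le> rx \<and> rx \<le> 2 ^ Suc k * t"
      define s where "s = min (2 * t) rx"
      have t0: "t > 0" using t r by auto
      have s1: "r \<le> s" "s \<le> rx" "t \<le> s" "s \<le> 2 * t" using t r t0 unfolding s_def by auto
      have "rx \<le> 2^k * s"
      proof (cases "2 * t \<le> rx")
        case True
        then show ?thesis using t unfolding s_def by (simp add: algebra_simps)
      next
        case False
        have "(1::real) \<le> 2^k" by simp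
        then have "rx \<le> 2^k * rx" using r by (simp add: mult_le_cancel_right1)
        then show ?thesis using False unfolding s_def by simp
      qed
      then have ss: "separates E x s" using Suc.IH s1 by blast
      have "beta E x s * s \<le> 1/8 * s" using bt[OF s1(1,2)] s1 r by (intro mult_right_mono) auto
      then have bb: "beta E x s * s \<le> t / 4" using s1 by linarith
      have bs: "ball x t \<subseteq> ball x s" using s1(3) by (auto simp: subset_ball)
      have s0: "s > 0" using s1 t0 by linarith
      show "separates E x t" using core[OF s0 t0 xE bs ss bb] .
    qed
  qed
  obtain k :: nat where "rx / r < 2^k" using real_arch_pow[of 2 "rx / r"] by auto
  then have "rx \<le> 2^k * r" using r by (simp add: field_simps)
  then show "separates E x r" using step[of k] r by auto
qed

end
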